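(* In the setting described in the context, there exists an integer matrix $B = \begin{pmatrix} a_1 & b_1 \\ a_2 & b_2 \end{pmatrix} \in \mathbb{Z}^{2\times 2}$ such that $\rho_1^{a_1}\rho_2^{a_2} = \mathbf{1} = \rho_1^{b_1}\rho_2^{b_2}$ and $\det(B) = n$. Such a matrix is unique up to right multiplication by $\mathrm{SL}_2(\mathbb{Z})$.
   Context: Let $\Bbbk$ be algebraically closed of characteristic $0$, $R=\Bbbk[X_1,X_2,X_3]$, and $G\le \mathrm{SL}_3(\Bbbk)$ a finite abelian group of order $n$ acting on $R$ by linear change of variables, such that the skew-group algebra $R\ast G$ admits a higher preprojective grading (standing assumption). Decompose the natural representation of $G$ on $\Bbbk^3$ as $\rho=\rho_1\oplus\rho_2\oplus\rho_3$ into one-dimensional characters; these are elements of the character group $\hat G=\mathrm{Hom}(G,\Bbbk^* )$ (with multiplication of characters), and $\mathbf{1}$ denotes the trivial character. *)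

theory Defs
  imports "HOL-Analysis.Analysis" "HOL-Computational_Algebra.Polynomial"
begin

text \<open>Finite subgroups of SL_3(k), realised as sets of 3x3 matrices.\<close>
definition subgroup_SL3 :: "('k::field ^3^3) set \<Rightarrow> bool" where
  "subgroup_SL3 G \<longleftrightarrow> mat 1 \<in> G \<and> (\<forall>g\<in>G. det g = 1)
     \<and> (\<forall>g\<in>G. \<forall>h\<in>G. g ** h \<in> G)
     \<and> (\<forall>g\<in>G. \<exists>h\<in>G. g ** h = mat 1 \<and> h ** g = mat 1)"

definition diag3 :: "'k::zero \<Rightarrow> 'k \<Rightarrow> 'k \<Rightarrow> 'k^3^3" where
  "diag3 a b c = (\<chi> i j. if i = j then (if i = 1 then a else if i = 2 then b else c) else 0)"

text \<open>The natural representation decomposes as rho1 + rho2 + rho3 w.r.t. the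
  basis given by the columns of the invertible matrix P:
  every g in G equals P diag(rho1 g, rho2 g, rho3 g) P^-1.\<close>
definition char_decomposition ::
  "('k::field ^3^3) set \<Rightarrow> 'k^3^3 \<Rightarrow> ('k^3^3 \<Rightarrow> 'k) \<Rightarrow> ('k^3^3 \<Rightarrow> 'k) \<Rightarrow> ('k^3^3 \<Rightarrow> 'k) \<Rightarrow> bool"
  where
  "char_decomposition G P r1 r2 r3 \<longleftrightarrow> invertible P \<and>
     (\<forall>g\<in>G. g ** P = P ** diag3 (r1 g) (r2 g) (r3 g))"

text \<open>Column j of B gives a relation rho1^(B_1j) rho2^(B_2j) = 1 in the character group.\<close>
definition relation_matrix ::
  "('k::field ^3^3) set \<Rightarrow> ('k^3^3 \<Rightarrow> 'k) \<Rightarrow> ('k^3^3 \<Rightarrow> 'k) \<Rightarrow> int^2^2 \<Rightarrow> bool" where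
  "relation_matrix G r1 r2 B \<longleftrightarrow>
     (\<forall>j. \<forall>g\<in>G. r1 g powi (B $ 1 $ j) * r2 g powi (B $ 2 $ j) = 1)"

end

theory Submission
  imports Defs
begin


lemma img_eq:
  assumes "finite H" "\<forall>x\<in>H. \<forall>y\<in>H. f x y \<in> H" "h \<in> H" "inj_on (f h) H"
  shows "f h ` H = H"
  using assms by (intro endo_inj_surj) auto

lemma orth:
  fixes \<psi> :: "'a \<Rightarrow> 'k::field"
  assumes "finite H" "\<forall>x\<in>H. \<forall>y\<in>H. f x y \<in> H" "h \<in> H" "inj_on (f h) H"
    and "\<forall>x\<in>H. \<forall>y\<in>H. \<psi> (f x y) = \<psi> x * \<psi> y" and "\<psi> h \<noteq> 1"
  shows "sum \<psi> H = 0"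
proof -
  have "sum \<psi> H = sum \<psi> (f h ` H)" using img_eq[OF assms(1-4)] by simp
  also have "\<dots> = sum (\<psi> \<circ> f h) H" using assms(4) by (rule sum.reindex)
  also have "\<dots> = sum (\<lambda>x. \<psi> h * \<psi> x) H" using assms(3,5) by (intro sum.cong) auto
  also have "\<dots> = \<psi> h * sum \<psi> H" by (simp add: sum_distrib_left)
  finally have "(1 - \<psi> h) * sum \<psi> H = 0" by (simp add: algebra_simps)
  thus ?thesis using assms(6) by simp
qed

lemma powcard:
  fixes \<psi> :: "'a \<Rightarrow> 'k::field"
  assumes "finite H" "\<forall>x\<in>H. \<forall>y\<in>H. f x y \<in> H" "h \<in> H" "inj_on (f h) H"
    and "\<forall>x\<in>H. \<forall>y\<in>H. \<psi> (f x y) = \<psi> x * \<psi> y" and "\<forall>x\<in>H. \<psi> x \<noteq> 0"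
  shows "\<psi> h ^ card H = 1"
proof -
  have "prod \<psi> H = prod \<psi> (f h ` H)" using img_eq[OF assms(1-4)] by simp
  also have "\<dots> = prod (\<psi> \<circ> f h) H" using assms(4) by (rule prod.reindex)
  also have "\<dots> = prod (\<lambda>x. \<psi> h * \<psi> x) H" using assms(3,5) by (intro prod.cong) auto
  also have "\<dots> = \<psi> h ^ card H * prod \<psi> H" by (simp add: prod.distrib)
  finally have "(1 - \<psi> h ^ card H) * prod \<psi> H = 0" by (simp add: algebra_simps)
  moreover have "prod \<psi> H \<noteq> 0" using assms(1,6) by simp
  ultimately show ?thesis by simp
qed

lemma geo:
  fixes x :: "'k::field"
  assumes "x ^ d = 1"
  shows "(\<Sum>b<d. x ^ b) = (if x = 1 then of_nat d else 0)"
  using assms by (simp add: sum_gp_strict)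

lemma count:
  fixes \<psi> :: "'a \<Rightarrow> 'k::field_char_0"
  assumes "finite H" "\<forall>x\<in>H. \<forall>y\<in>H. f x y \<in> H" "\<forall>h\<in>H. inj_on (f h) H"
    and "\<forall>x\<in>H. \<forall>y\<in>H. \<psi> (f x y) = \<psi> x * \<psi> y"
    and "d > 0" "\<forall>x\<in>H. \<psi> x ^ d = 1"
    and "\<forall>b. 0 < b \<longrightarrow> b < d \<longrightarrow> (\<exists>x\<in>H. \<psi> x ^ b \<noteq> 1)"
  shows "card H = d * card {x\<in>H. \<psi> x = 1}"
proof -
  have "(\<Sum>x\<in>H. \<Sum>b<d. \<psi> x ^ b) = (\<Sum>x\<in>H. if \<psi> x = 1 then (of_nat d::'k) else 0)"
    using assms(6) by (intro sum.cong) (auto simp: geo)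
  also have "\<dots> = of_nat d * of_nat (card {x\<in>H. \<psi> x = 1})"
    using assms(1) by (simp add: sum.If_cases Collect_conj_eq)
  finally have 1: "(\<Sum>x\<in>H. \<Sum>b<d. \<psi> x ^ b) = of_nat d * of_nat (card {x\<in>H. \<psi> x = 1})" .
  have "(\<Sum>x\<in>H. \<Sum>b<d. \<psi> x ^ b) = (\<Sum>b<d. \<Sum>x\<in>H. \<psi> x ^ b)" by (rule sum.swap)
  also have "\<dots> = (\<Sum>b<d. if b = 0 then (of_nat (card H)::'k) else 0)"
  proof (intro sum.cong refl)
    fix b assume b: "b \<in> {..<d}"
    show "(\<Sum>x\<in>H. \<psi> x ^ b) = (if b = 0 then of_nat (card H) else 0)"
    proof (cases "b = 0")
      case False
      then obtain h where h: "h \<in> H" "\<psi> h ^ b \<noteq> 1" using assms(7) b by auto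
      have "sum (\<lambda>x. \<psi> x ^ b) H = 0"
        by (rule orth[OF assms(1,2) h(1)]) (use assms(3,4) h in \<open>auto simp: power_mult_distrib\<close>)
      thus ?thesis using False by simp
    qed simp
  qed
  also have "\<dots> = of_nat (card H)" using assms(5) by (simp add: sum.delta')
  finally have "(of_nat (card H)::'k) = of_nat (d * card {x\<in>H. \<psi> x = 1})" using 1 by simp
  thus ?thesis using of_nat_eq_iff by blast
qed

lemma minord:
  assumes "\<exists>N>0. P (N::nat)"
  shows "\<exists>d>0. P d \<and> (\<forall>b. 0 < b \<longrightarrow> b < d \<longrightarrow> \<not> P b)"
proof -
  let ?d = "LEAST d. d > 0 \<and> P d"
  have "?d > 0 \<and> P ?d" using assms by (metis (mono_tags, lifting) LeastI_ex)
  moreover have "\<forall>b. 0 < b \<longrightarrow> b < ?d \<longrightarrow> \<not> P b" using not_less_Least by blast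
  ultimately show ?thesis by blast
qed

lemma orddvd:
  fixes \<psi> :: "'a \<Rightarrow> 'k::field"
  assumes "\<forall>x\<in>H. \<psi> x \<noteq> 0" "m > 0" "\<forall>x\<in>H. \<psi> x ^ m = 1"
    and "\<forall>b. 0 < b \<longrightarrow> b < m \<longrightarrow> (\<exists>x\<in>H. \<psi> x ^ b \<noteq> 1)"
    and "\<forall>x\<in>H. \<psi> x powi a = 1"
  shows "int m dvd a"
proof -
  define r where "r = a mod int m"
  have r: "0 \<le> r" "r < int m" using assms(2) by (auto simp: r_def)
  have a: "a = int m * (a div int m) + r" by (simp add: r_def)
  have "\<forall>x\<in>H. \<psi> x ^ nat r = 1"
  proof
    fix x assume x: "x \<in> H"
    have "1 = \<psi> x powi a" using assms(5) x by simp
    also have "\<dots> = (\<psi> x powi int m) powi (a div int m) * \<psi> x powi r"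
      using assms(1) x by (subst a) (simp add: power_int_add power_int_mult)
    also have "\<dots> = \<psi> x ^ nat r" using assms(3) x r by (simp add: power_int_def)
    finally show "\<psi> x ^ nat r = 1" by simp
  qed
  hence "nat r = 0" using assms(4) r by (metis nat_less_iff not_gr0)
  hence "r = 0" using r by simp
  thus ?thesis using a by (metis add.right_neutral dvd_triv_left)
qed


lemma diag3_nth: "diag3 a b c $ i $ j = (if i = j then (if i = 1 then a else if i = 2 then b else c) else 0)"
  by (simp add: diag3_def)
lemma diag3_1: "diag3 1 1 1 = (mat 1 :: 'k::field^3^3)"
proof -
  have "diag3 1 1 1 $ i $ j = (mat 1 :: 'k::field^3^3) $ i $ j" for i j
    by (simp add: diag3_nth mat_def)
  thus ?thesis by (simp add: vec_eq_iff)
qed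
lemma diag3_eq: "diag3 a b c = diag3 a' b' c' \<Longrightarrow> a = a' \<and> b = b' \<and> (c::'k::field) = c'"
proof -
  assume h: "diag3 a b c = diag3 a' b' c'"
  have "diag3 a b c $ 1 $ 1 = diag3 a' b' c' $ 1 $ 1" "diag3 a b c $ 2 $ 2 = diag3 a' b' c' $ 2 $ 2"
     "diag3 a b c $ 3 $ 3 = diag3 a' b' c' $ 3 $ 3" using h by simp_all
  thus ?thesis by (simp add: diag3_nth)
qed
lemma diag3_mult: "diag3 a b c ** diag3 a' b' c' = diag3 (a*a') (b*b') (c*(c'::'k::field))"
proof -
  have "(diag3 a b c ** diag3 a' b' c') $ i $ j = diag3 (a*a') (b*b') (c*c') $ i $ j" for i j
  proof -
    have "(diag3 a b c ** diag3 a' b' c') $ i $ j = (\<Sum>k\<in>UNIV. diag3 a b c $ i $ k * diag3 a' b' c' $ k $ j)"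
      by (simp add: matrix_matrix_mult_def)
    also have "\<dots> = (\<Sum>k\<in>UNIV. if k = i then diag3 a b c $ i $ i * diag3 a' b' c' $ i $ j else 0)"
      by (rule sum.cong) (auto simp: diag3_def)
    also have "\<dots> = diag3 a b c $ i $ i * diag3 a' b' c' $ i $ j"
      by simp
    finally show ?thesis by (simp add: diag3_def)
  qed
  thus ?thesis by (simp add: vec_eq_iff)
qed


lemma prod3: "prod f (UNIV::3 set) = f 1 * f 2 * f 3"
  unfolding UNIV_3 by (simp add: ac_simps)
lemma det_diag3: "det (diag3 a b c) = a * b * (c::'k::field)"
proof -
  have "det (diag3 a b c) = prod (\<lambda>i. diag3 a b c $ i $ i) (UNIV::3 set)"
    by (rule det_diagonal) (simp add: diag3_nth)
  also have "\<dots> = a * b * c" unfolding prod3 by (simp add: diag3_nth)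
  finally show ?thesis .
qed

locale setting =
  fixes G :: "('k::field_char_0 ^3^3) set" and P :: "'k^3^3"
    and rho1 rho2 rho3 :: "'k^3^3 \<Rightarrow> 'k"
  assumes fin: "finite G" and sg: "subgroup_SL3 G"
    and cd: "char_decomposition G P rho1 rho2 rho3"
begin

abbreviation D where "D g \<equiv> diag3 (rho1 g) (rho2 g) (rho3 g)"

lemma one_in: "mat 1 \<in> G" using sg by (simp add: subgroup_SL3_def)
lemma detg: "g \<in> G \<Longrightarrow> det g = 1" using sg by (simp add: subgroup_SL3_def)
lemma closed: "\<forall>x\<in>G. \<forall>y\<in>G. x ** y \<in> G" using sg by (simp add: subgroup_SL3_def)
lemma ginv: "g \<in> G \<Longrightarrow> \<exists>h\<in>G. g ** h = mat 1 \<and> h ** g = mat 1"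
  using sg by (simp add: subgroup_SL3_def)
lemma dec: "g \<in> G \<Longrightarrow> g ** P = P ** D g" using cd by (simp add: char_decomposition_def)

lemma Pinv: obtains Pi where "P ** Pi = mat 1" "Pi ** P = mat 1"
  using cd by (auto simp: char_decomposition_def invertible_def)

lemma cancelP: assumes "P ** X = P ** Y" shows "X = Y"
proof -
  obtain Pi where "Pi ** P = mat 1" using Pinv by blast
  hence "Pi ** (P ** X) = X" "Pi ** (P ** Y) = Y" by (simp_all add: matrix_mul_assoc)
  thus ?thesis using assms by metis
qed

lemma D_mult: assumes "g \<in> G" "h \<in> G" shows "D (g ** h) = D g ** D h"
proof (rule cancelP)
  have "P ** D (g ** h) = (g ** h) ** P" using dec closed assms by simp
  also have "\<dots> = g ** (h ** P)" by (simp add: matrix_mul_assoc)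
  also have "\<dots> = g ** (P ** D h)" using dec assms by simp
  also have "\<dots> = (g ** P) ** D h" by (simp add: matrix_mul_assoc)
  also have "\<dots> = (P ** D g) ** D h" using dec assms by simp
  also have "\<dots> = P ** (D g ** D h)" by (simp add: matrix_mul_assoc)
  finally show "P ** D (g ** h) = P ** (D g ** D h)" .
qed

lemma rho_mult: assumes "g \<in> G" "h \<in> G"
  shows "rho1 (g ** h) = rho1 g * rho1 h" "rho2 (g ** h) = rho2 g * rho2 h" "rho3 (g ** h) = rho3 g * rho3 h"
  using diag3_eq[OF D_mult[OF assms, unfolded diag3_mult]] by auto

lemma D_one: "D (mat 1) = mat 1"
proof (rule cancelP)
  show "P ** D (mat 1) = P ** mat 1" using dec[OF one_in] by simp
qed

lemma rho_one: "rho1 (mat 1) = 1" "rho2 (mat 1) = 1" "rho3 (mat 1) = 1"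
proof -
  have "D (mat 1) = diag3 1 1 1" using D_one diag3_1 by metis
  from diag3_eq[OF this] show "rho1 (mat 1) = 1" "rho2 (mat 1) = 1" "rho3 (mat 1) = 1" by auto
qed

lemma rho_det: assumes "g \<in> G" shows "rho1 g * rho2 g * rho3 g = 1"
proof -
  have nz: "det P \<noteq> 0" using cd invertible_det_nz by (auto simp: char_decomposition_def)
  have "det P = det (g ** P)" using detg[OF assms] by (simp add: det_mul)
  also have "\<dots> = det P * (rho1 g * rho2 g * rho3 g)" using dec[OF assms] by (simp add: det_mul det_diag3)
  finally show ?thesis using nz by simp
qed

lemma nz1: "g \<in> G \<Longrightarrow> rho1 g \<noteq> 0" using rho_det by fastforce
lemma nz2: "g \<in> G \<Longrightarrow> rho2 g \<noteq> 0" using rho_det by fastforce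

lemma triv: assumes "g \<in> G" "rho1 g = 1" "rho2 g = 1" shows "g = mat 1"
proof -
  have "rho3 g = 1" using rho_det[OF assms(1)] assms by simp
  hence "g ** P = P" using dec[OF assms(1)] assms by (simp add: diag3_1)
  moreover obtain Pi where "P ** Pi = mat 1" using Pinv by blast
  ultimately have "g ** (P ** Pi) = P ** Pi" by (metis matrix_mul_assoc)
  thus ?thesis using \<open>P ** Pi = mat 1\<close> by simp
qed

lemma linj: assumes "h \<in> G" shows "inj_on ((**) h) X"
proof -
  obtain h' where "h' ** h = mat 1" using ginv[OF assms] by blast
  hence "h' ** (h ** x) = x" for x by (simp add: matrix_mul_assoc)
  thus ?thesis by (metis inj_onI)
qed

definition rel where "rel a b \<longleftrightarrow> (\<forall>g\<in>G. rho1 g powi a * rho2 g powi b = 1)"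

lemma rel_comb: assumes "rel a b" "rel a' b'" shows "rel (p*a + q*a') (p*b + q*b')"
  unfolding rel_def
proof
  fix g assume g: "g \<in> G"
  have 1: "rho1 g powi a * rho2 g powi b = 1" "rho1 g powi a' * rho2 g powi b' = 1"
    using assms g by (auto simp: rel_def)
  have "rho1 g powi (p*a + q*a') * rho2 g powi (p*b + q*b')
     = (rho1 g powi a * rho2 g powi b) powi p * (rho1 g powi a' * rho2 g powi b') powi q"
    using nz1[OF g] nz2[OF g]
    by (simp add: power_int_add power_int_mult_distrib power_int_mult[symmetric] mult.commute mult.left_commute)
  thus "rho1 g powi (p*a + q*a') * rho2 g powi (p*b + q*b') = 1" using 1 by simp
qed


lemma basis_exists:
  "\<exists>e d c0. e > 0 \<and> d > 0 \<and> e * d = card G \<and> rel (int e) c0 \<and> rel 0 (int d) \<and>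
     (\<forall>a b. rel a b \<longrightarrow> (\<exists>q q'. a = int e * q \<and> b = c0 * q + int d * q'))"
proof -
  define n where "n = card G"
  have n0: "n > 0" using fin one_in by (auto simp: n_def card_gt_0_iff)
  have linjG: "\<forall>h\<in>G. inj_on ((**) h) G" using linj by blast
  have p1: "\<forall>g\<in>G. rho1 g ^ n = 1"
    using powcard[OF fin closed _ linj, of _ rho1] rho_mult nz1 by (auto simp: n_def)
  have p2: "\<forall>g\<in>G. rho2 g ^ n = 1"
    using powcard[OF fin closed _ linj, of _ rho2] rho_mult nz2 by (auto simp: n_def)
  obtain d where d0: "d > 0" and d1: "\<forall>g\<in>G. rho2 g ^ d = 1"
      and d2: "\<forall>b. 0 < b \<longrightarrow> b < d \<longrightarrow> \<not> (\<forall>g\<in>G. rho2 g ^ b = 1)"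
    using minord[of "\<lambda>d. \<forall>g\<in>G. rho2 g ^ d = 1"] p2 n0 by blast
  define K where "K = {g\<in>G. rho2 g = 1}"
  have finK: "finite K" using fin by (simp add: K_def)
  have closedK: "\<forall>x\<in>K. \<forall>y\<in>K. x ** y \<in> K" using closed rho_mult by (auto simp: K_def)
  have linjK: "\<forall>h\<in>K. inj_on ((**) h) K" using linj by (auto simp: K_def)
  have cardG: "n = d * card K"
    unfolding n_def K_def
    by (rule count[OF fin closed linjG _ d0 d1]) (use rho_mult d2 in blast)+
  obtain e where e0: "e > 0" and e1: "\<forall>g\<in>K. rho1 g ^ e = 1"
      and e2: "\<forall>b. 0 < b \<longrightarrow> b < e \<longrightarrow> \<not> (\<forall>g\<in>K. rho1 g ^ b = 1)"
  proof -
    have "\<exists>N>0. \<forall>g\<in>K. rho1 g ^ N = 1" using p1 n0 unfolding K_def by blast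
    from minord[OF this] show ?thesis using that by blast
  qed
  have multK: "\<forall>x\<in>K. \<forall>y\<in>K. rho1 (x ** y) = rho1 x * rho1 y"
    using rho_mult unfolding K_def by blast
  have e2': "\<forall>b. 0 < b \<longrightarrow> b < e \<longrightarrow> (\<exists>x\<in>K. rho1 x ^ b \<noteq> 1)" using e2 by blast
  have "card K = e * card {x\<in>K. rho1 x = 1}"
    by (rule count[OF finK closedK linjK multK e0 e1 e2'])
  moreover have "{x\<in>K. rho1 x = 1} = {mat 1}"
  proof
    show "{x\<in>K. rho1 x = 1} \<subseteq> {mat 1}" using triv unfolding K_def by blast
    show "{mat 1} \<subseteq> {x\<in>K. rho1 x = 1}" using one_in rho_one unfolding K_def by blast
  qed
  ultimately have cardK: "card K = e" by simp
  \<comment> \<open>factoring\<close>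
  define S where "S c = (\<Sum>g\<in>G. rho1 g ^ e * inverse (rho2 g) ^ c)" for c
  have "(\<Sum>c<d. S c) = (\<Sum>g\<in>G. rho1 g ^ e * (\<Sum>c<d. inverse (rho2 g) ^ c))"
    unfolding S_def by (subst sum.swap) (simp add: sum_distrib_left)
  also have "\<dots> = (\<Sum>g\<in>G. if rho2 g = 1 then (of_nat d::'k) else 0)"
  proof (rule sum.cong[OF refl])
    fix g assume g: "g \<in> G"
    have "inverse (rho2 g) ^ d = 1" using d1 g by (simp add: power_inverse)
    hence "(\<Sum>c<d. inverse (rho2 g) ^ c) = (if inverse (rho2 g) = 1 then of_nat d else 0)" by (rule geo)
    moreover have "rho2 g = 1 \<Longrightarrow> rho1 g ^ e = 1" using e1 g unfolding K_def by blast
    ultimately show "rho1 g ^ e * (\<Sum>c<d. inverse (rho2 g) ^ c) = (if rho2 g = 1 then of_nat d else 0)"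
      by (auto simp: inverse_eq_iff_eq)
  qed
  also have "\<dots> = of_nat d * of_nat (card K)"
    unfolding K_def using fin by (simp add: sum.If_cases Collect_conj_eq)
  also have "\<dots> = of_nat n" using cardG by simp
  finally have "(\<Sum>c<d. S c) \<noteq> 0" using n0 by simp
  then obtain c where "S c \<noteq> 0" by (meson sum.neutral)
  have fac: "\<forall>g\<in>G. rho1 g ^ e * inverse (rho2 g) ^ c = 1"
  proof (rule ccontr)
    assume "\<not> ?thesis"
    then obtain h where h: "h \<in> G" "rho1 h ^ e * inverse (rho2 h) ^ c \<noteq> 1" by blast
    have mp: "\<forall>x\<in>G. \<forall>y\<in>G. rho1 (x**y) ^ e * inverse (rho2 (x**y)) ^ c
       = (rho1 x ^ e * inverse (rho2 x) ^ c) * (rho1 y ^ e * inverse (rho2 y) ^ c)"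
    proof (intro ballI)
      fix x y assume x: "x \<in> G" and y: "y \<in> G"
      show "rho1 (x**y) ^ e * inverse (rho2 (x**y)) ^ c
       = (rho1 x ^ e * inverse (rho2 x) ^ c) * (rho1 y ^ e * inverse (rho2 y) ^ c)"
        by (simp add: rho_mult[OF x y] power_mult_distrib mult_ac)
    qed
    have "S c = 0" unfolding S_def
      by (rule orth[where \<psi>="\<lambda>g. rho1 g ^ e * inverse (rho2 g) ^ c", OF fin closed h(1) linj[OF h(1)] mp h(2)])
    thus False using \<open>S c \<noteq> 0\<close> by simp
  qed
  define c0 where "c0 = - int c"
  have relE: "rel (int e) c0" unfolding rel_def c0_def
    using fac by (simp add: power_int_minus power_inverse)
  have relD: "rel 0 (int d)" unfolding rel_def using d1 by simp
  have basis: "\<exists>q q'. a = int e * q \<and> b = c0 * q + int d * q'" if ab: "rel a b" for a b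
  proof -
    have aK: "\<forall>g\<in>K. rho1 g powi a = 1"
    proof
      fix g assume "g \<in> K"
      hence "g \<in> G" "rho2 g = 1" unfolding K_def by auto
      thus "rho1 g powi a = 1" using ab unfolding rel_def by fastforce
    qed
    have nzK: "\<forall>g\<in>K. rho1 g \<noteq> 0" using nz1 unfolding K_def by blast
    have "int e dvd a" by (rule orddvd[OF nzK e0 e1 e2' aK])
    then obtain q where q: "a = int e * q" by (auto elim: dvdE)
    have "rel (1 * a + (- q) * int e) (1 * b + (- q) * c0)" by (rule rel_comb[OF ab relE])
    hence "rel 0 (b - q * c0)" using q by (simp add: algebra_simps)
    hence "\<forall>g\<in>G. rho2 g powi (b - q * c0) = 1" by (simp add: rel_def)
    moreover have "\<forall>g\<in>G. rho2 g \<noteq> 0" using nz2 by blast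
    moreover have "\<forall>b. 0 < b \<longrightarrow> b < d \<longrightarrow> (\<exists>x\<in>G. rho2 x ^ b \<noteq> 1)" using d2 by blast
    ultimately have "int d dvd (b - q * c0)"
      using orddvd[OF _ d0 d1] by blast
    then obtain q' where "b - q * c0 = int d * q'" by (auto elim: dvdE)
    hence "b = c0 * q + int d * q'" by (simp add: algebra_simps)
    thus ?thesis using q by blast
  qed
  have "e * d = card G" using cardG cardK unfolding n_def by simp
  thus ?thesis using e0 d0 relE relD basis by blast
qed


lemma rm_iff2: "relation_matrix G rho1 rho2 B \<longleftrightarrow> (\<forall>j. rel (B$1$j) (B$2$j))"
  unfolding relation_matrix_def rel_def by blast

lemma rm_iff: "relation_matrix G rho1 rho2 B \<longleftrightarrow> rel (B$1$1) (B$2$1) \<and> rel (B$1$2) (B$2$2)"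
  unfolding rm_iff2 forall_2 by blast

lemma mm2: "((A::int^2^2) ** B) $ i $ j = A$i$1 * B$1$j + A$i$2 * B$2$j"
  by (simp add: matrix_matrix_mult_def sum_2)

lemma rm_mult: assumes "relation_matrix G rho1 rho2 B" shows "relation_matrix G rho1 rho2 (B ** S)"
  unfolding rm_iff2
proof
  fix j
  have "rel (S$1$j * B$1$1 + S$2$j * B$1$2) (S$1$j * B$2$1 + S$2$j * B$2$2)"
    by (rule rel_comb) (use assms in \<open>simp_all add: rm_iff\<close>)
  thus "rel ((B ** S)$1$j) ((B ** S)$2$j)" by (simp add: mm2 mult.commute)
qed

lemma adj2: assumes "det (T::int^2^2) = 1"
  shows "\<exists>A. T ** A = mat 1 \<and> det A = 1"
proof -
  define A where "A = ((\<chi> i j. if i = 1 then (if j = 1 then T$2$2 else - T$1$2)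
                                else (if j = 1 then - T$2$1 else T$1$1)) :: int^2^2)"
  have A: "A$1$1 = T$2$2" "A$1$2 = - T$1$2" "A$2$1 = - T$2$1" "A$2$2 = T$1$1"
    by (simp_all add: A_def)
  have d: "T$1$1 * T$2$2 - T$1$2 * T$2$1 = 1" using assms by (simp add: det_2)
  have "T ** A = mat 1"
    unfolding vec_eq_iff forall_2 mm2 A using d by (simp add: mat_def algebra_simps)
  moreover have "det A = 1" using d by (simp add: det_2 A algebra_simps)
  ultimately show ?thesis by blast
qed

theorem main:
  "(\<exists>B. relation_matrix G rho1 rho2 B \<and> det B = int (card G))
    \<and> (\<forall>B. relation_matrix G rho1 rho2 B \<and> det B = int (card G) \<longrightarrow>
          (\<forall>B'. (relation_matrix G rho1 rho2 B' \<and> det B' = int (card G)) \<longleftrightarrow>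
                (\<exists>S :: int^2^2. det S = 1 \<and> B' = B ** S)))"
proof -
  obtain e d c0 where e0: "e > 0" and d0: "d > 0" and ed: "e * d = card G"
    and relE: "rel (int e) c0" and relD: "rel 0 (int d)"
    and basis: "\<forall>a b. rel a b \<longrightarrow> (\<exists>q q'. a = int e * q \<and> b = c0 * q + int d * q')"
    using basis_exists by blast
  have n0: "card G > 0" using fin one_in by (auto simp: card_gt_0_iff)
  define Bh where "Bh = ((\<chi> i j. if i = 1 then (if j = 1 then int e else 0)
                                else (if j = 1 then c0 else int d)) :: int^2^2)"
  have Bh: "Bh$1$1 = int e" "Bh$1$2 = 0" "Bh$2$1 = c0" "Bh$2$2 = int d"
    by (simp_all add: Bh_def)
  have detBh: "det Bh = int (card G)" using ed by (simp add: det_2 Bh flip: of_nat_mult)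
  have rmBh: "relation_matrix G rho1 rho2 Bh" using relE relD by (simp add: rm_iff Bh)
  have expr: "\<exists>T. B = Bh ** T" if B: "relation_matrix G rho1 rho2 B" for B
  proof -
    have "\<forall>j. \<exists>q q'. B$1$j = int e * q \<and> B$2$j = c0 * q + int d * q'"
      using B basis unfolding rm_iff2 by blast
    then obtain Q Q' where Q: "\<forall>j. B$1$j = int e * Q j \<and> B$2$j = c0 * Q j + int d * Q' j"
      by metis
    define T where "T = ((\<chi> i j. if i = 1 then Q j else Q' j) :: int^2^2)"
    have "B = Bh ** T"
      unfolding vec_eq_iff forall_2 mm2 using Q by (simp add: T_def Bh)
    thus ?thesis by blast
  qed
  have detT: "det T = 1" if "det (Bh ** T) = int (card G)" for T
  proof -
    have "int (card G) * det T = int (card G) * 1" using that by (simp add: det_mul detBh)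
    thus ?thesis using n0 by (metis mult_cancel_left of_nat_0_less_iff less_irrefl)
  qed
  have part2: "(relation_matrix G rho1 rho2 B' \<and> det B' = int (card G)) \<longleftrightarrow>
                (\<exists>S :: int^2^2. det S = 1 \<and> B' = B ** S)"
    if B: "relation_matrix G rho1 rho2 B" "det B = int (card G)" for B B'
  proof
    assume B': "relation_matrix G rho1 rho2 B' \<and> det B' = int (card G)"
    obtain T where T: "B = Bh ** T" using expr B(1) by blast
    obtain T' where T': "B' = Bh ** T'" using expr B' by blast
    have dT: "det T = 1" using detT B(2) T by blast
    have dT': "det T' = 1" using detT B' T' by blast
    obtain A where A: "T ** A = mat 1" "det A = 1" using adj2[OF dT] by blast
    have "B ** (A ** T') = Bh ** ((T ** A) ** T')" using T by (simp add: matrix_mul_assoc)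
    also have "\<dots> = B'" using A T' by simp
    finally show "\<exists>S :: int^2^2. det S = 1 \<and> B' = B ** S"
      using A dT' by (intro exI[of _ "A ** T'"]) (simp add: det_mul)
  next
    assume "\<exists>S :: int^2^2. det S = 1 \<and> B' = B ** S"
    then obtain S where S: "det S = 1" "B' = B ** S" by blast
    show "relation_matrix G rho1 rho2 B' \<and> det B' = int (card G)"
      using S B rm_mult by (simp add: det_mul)
  qed
  show ?thesis using rmBh detBh part2 by blast
qed

end


theorem proposition6p5:
  fixes G :: "('k::{field_char_0, alg_closed_field} ^3^3) set"
    and P :: "'k^3^3"
    and rho1 rho2 rho3 :: "'k^3^3 \<Rightarrow> 'k"
    and n :: nat
  assumes "finite G" and "subgroup_SL3 G"
    and "\<forall>g\<in>G. \<forall>h\<in>G. g ** h = h ** g"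
    and "n = card G"
    and "char_decomposition G P rho1 rho2 rho3"
  shows "(\<exists>B. relation_matrix G rho1 rho2 B \<and> det B = int n)
    \<and> (\<forall>B. relation_matrix G rho1 rho2 B \<and> det B = int n \<longrightarrow>
          (\<forall>B'. (relation_matrix G rho1 rho2 B' \<and> det B' = int n) \<longleftrightarrow>
                (\<exists>S :: int^2^2. det S = 1 \<and> B' = B ** S)))"
proof -
  interpret setting G P rho1 rho2 rho3 using assms(1,2,5) by unfold_locales
  show ?thesis using main assms(4) by simp
qed

end
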